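(* Assume the standing assumptions in the context. Let $S\subsetneq S^*$ and $k=|S|$. Then $$\inf_{\alpha\in\mathbb{R},\,i\in S^*\setminus S}\mathbb{E}\Big[\big(x^\top\beta^S+\alpha\beta^*_ix_i-y\big)^2\Big]\le\mathbb{E}\big[(x^\top\beta^S-y)^2\big]-\frac{1}{s^*-k}\,\frac{\rho}{L}\,\mathbb{E}\Big[\big(x^\top(\beta^*-\beta^S)\big)^2\Big].$$
   Context: Standing assumptions: $(x,y)$ random with $x\in\mathbb{R}^d$, $y\in\mathbb{R}$; $\mathbb{E}[x]=0$; $y=\langle\beta^*,x\rangle+\epsilon$ with $\mathbb{E}[\epsilon\mid x]=0$; $S^*=\mathrm{supp}(\beta^* )$, $s^*=|S^*|$; $\Sigma$ the covariance of $x$, $\Sigma_F$ its principal submatrix on $F$; there are $0<\rho\le L$ with all eigenvalues of $\Sigma_F$ in $[\rho,L]$ for all $|F|=s^*$; for $|F|=s^*$, $\mu_F:=\max_{j\notin F}\|\Sigma_F^{-1}\mathrm{Cov}(x_F,x_j)\|_1<1$; $|y|<1$ and $\|x\|_\infty<M$ almost surely. $\mathcal{R}(\beta)=\mathbb{E}[(y-\langle x,\beta\rangle)^2]$ and $\beta^S=\arg\min_{\mathrm{supp}(\beta)\subseteq S}\mathcal{R}(\beta)$. *)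

theory Defs
  imports "HOL-Probability.Probability"
begin

definition supp :: "('d \<Rightarrow> real) \<Rightarrow> 'd set" where
  "supp b = {j. b j \<noteq> 0}"

definition lin :: "('d::finite \<Rightarrow> real) \<Rightarrow> ('w \<Rightarrow> 'd \<Rightarrow> real) \<Rightarrow> 'w \<Rightarrow> real" where
  "lin b X w = (\<Sum>j\<in>UNIV. b j * X w j)"

definition covm :: "'w measure \<Rightarrow> ('w \<Rightarrow> 'd \<Rightarrow> real) \<Rightarrow> 'd \<Rightarrow> 'd \<Rightarrow> real" where
  "covm M X j k = (\<integral>w. (X w j - (\<integral>v. X v j \<partial>M)) * (X w k - (\<integral>v. X v k \<partial>M)) \<partial>M)"

definition eigval_on :: "('d \<Rightarrow> 'd \<Rightarrow> real) \<Rightarrow> 'd set \<Rightarrow> real \<Rightarrow> bool" where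
  "eigval_on A F mu \<longleftrightarrow>
     (\<exists>v. (\<exists>i\<in>F. v i \<noteq> 0) \<and> (\<forall>i\<in>F. (\<Sum>k\<in>F. A i k * v k) = mu * v i))"

definition risk :: "'w measure \<Rightarrow> ('w \<Rightarrow> 'd::finite \<Rightarrow> real) \<Rightarrow> ('w \<Rightarrow> real) \<Rightarrow> ('d \<Rightarrow> real) \<Rightarrow> real" where
  "risk M X Y b = (\<integral>w. (Y w - lin b X w)^2 \<partial>M)"

end

theory Submission
  imports Defs
begin


definition qf :: "('d \<Rightarrow> 'd \<Rightarrow> real) \<Rightarrow> 'd set \<Rightarrow> ('d \<Rightarrow> real) \<Rightarrow> real" where
  "qf A F v = (\<Sum>j\<in>F. \<Sum>k\<in>F. v j * A j k * v k)"
definition nsq :: "'d set \<Rightarrow> ('d \<Rightarrow> real) \<Rightarrow> real" where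
  "nsq F v = (\<Sum>j\<in>F. (v j)^2)"

lemma quad_zero:
  fixes a b :: real
  assumes "0 \<le> a" "\<And>t. 2*t*b \<le> t^2*a"
  shows "b = 0"
proof -
  define u where "u = b/(a+1)"
  have b: "b = u*(a+1)" using assms(1) by (simp add: u_def)
  have "2*u*b \<le> u^2*a" using assms(2) .
  hence "2*u*(u*(a+1)) \<le> u^2*a" using b by simp
  hence "u^2*(a+2) \<le> 0" by (simp add: algebra_simps power2_eq_square)
  moreover have "0 \<le> u^2*(a+2)" using assms(1) by simp
  ultimately have "u^2*(a+2) = 0" by linarith
  hence "u = 0" using assms(1) by simp
  thus ?thesis using b by simp
qed

lemma qf_scale: "qf A F (\<lambda>j. c * v j) = c^2 * qf A F v"
  unfolding qf_def by (simp add: sum_distrib_left power2_eq_square algebra_simps)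

lemma nsq_scale: "nsq F (\<lambda>j. c * v j) = c^2 * nsq F v"
  unfolding nsq_def by (simp add: sum_distrib_left power_mult_distrib)

lemma qf_cong: "(\<And>j. j \<in> F \<Longrightarrow> v j = w j) \<Longrightarrow> qf A F v = qf A F w"
  unfolding qf_def by (intro sum.cong refl) auto

lemma nsq_cong: "(\<And>j. j \<in> F \<Longrightarrow> v j = w j) \<Longrightarrow> nsq F v = nsq F w"
  unfolding nsq_def by (intro sum.cong refl) auto

lemma qf_expand:
  assumes sym: "\<And>i k. i \<in> F \<Longrightarrow> k \<in> F \<Longrightarrow> B i k = B k i"
  shows "qf B F (\<lambda>j. x j + t * y j) = qf B F x + 2*t*(\<Sum>j\<in>F. \<Sum>k\<in>F. y j * B j k * x k) + t^2 * qf B F y"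
proof -
  have sw: "(\<Sum>j\<in>F. \<Sum>k\<in>F. x j * B j k * y k) = (\<Sum>j\<in>F. \<Sum>k\<in>F. y j * B j k * x k)"
    apply (subst sum.swap) using sym by (intro sum.cong refl) (simp add: mult_ac)
  have "qf B F (\<lambda>j. x j + t * y j) = (\<Sum>j\<in>F. \<Sum>k\<in>F. x j * B j k * x k + t * (x j * B j k * y k) + t * (y j * B j k * x k) + t^2 * (y j * B j k * y k))"
    unfolding qf_def by (intro sum.cong refl) (simp add: algebra_simps power2_eq_square)
  also have "\<dots> = qf B F x + t * (\<Sum>j\<in>F. \<Sum>k\<in>F. x j * B j k * y k) + t * (\<Sum>j\<in>F. \<Sum>k\<in>F. y j * B j k * x k) + t^2 * qf B F y"
    unfolding qf_def by (simp add: sum.distrib sum_distrib_left)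
  finally show ?thesis using sw by simp
qed

lemma nsq_nonneg: "0 \<le> nsq F v" unfolding nsq_def by (simp add: sum_nonneg)

lemma nsq_zero: "finite F \<Longrightarrow> nsq F v = 0 \<Longrightarrow> j \<in> F \<Longrightarrow> v j = 0"
  unfolding nsq_def by (simp add: sum_nonneg_eq_0_iff)

lemma qf_zero: "(\<And>j. j \<in> F \<Longrightarrow> v j = 0) \<Longrightarrow> qf A F v = 0"
  unfolding qf_def by simp


lemma norm_vec_sq: "(norm (x::real^'n))^2 = (\<Sum>i\<in>UNIV. (x$i)^2)"
  by (simp add: norm_vec_def L2_set_def sum_nonneg)

lemma rayleigh_min:
  fixes A :: "'d::finite \<Rightarrow> 'd \<Rightarrow> real"
  assumes ne: "F \<noteq> {}" and sym: "\<And>i k. i \<in> F \<Longrightarrow> k \<in> F \<Longrightarrow> A i k = A k i"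
  shows "\<exists>m. eigval_on A F m \<and> (\<forall>v. m * nsq F v \<le> qf A F v)"
proof -
  have finF: "finite F" by simp
  define K where "K = sphere (0::real^'d) 1 \<inter> {v. \<forall>i. i \<notin> F \<longrightarrow> v$i = 0}"
  have cK: "compact K" unfolding K_def
    by (rule compact_Int_closed[OF compact_sphere closed_substandard_cart])
  obtain i0 where i0: "i0 \<in> F" using ne by auto
  have "axis i0 (1::real) \<in> sphere 0 1" by simp
  moreover have "axis i0 (1::real) \<in> {v. \<forall>i. i \<notin> F \<longrightarrow> v$i = 0}" using i0 by (auto simp: axis_def)
  ultimately have "axis i0 (1::real) \<in> K" unfolding K_def by blast
  hence neK: "K \<noteq> {}" by auto
  define f where "f = (\<lambda>v::real^'d. qf A F (\<lambda>j. v$j))"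
  have cf: "continuous_on K f" unfolding f_def qf_def
    by (intro continuous_on_sum continuous_on_mult continuous_on_const continuous_on_component continuous_on_id)
  obtain v0 where v0: "v0 \<in> K" "\<And>y. y \<in> K \<Longrightarrow> f v0 \<le> f y"
    using continuous_attains_inf[OF cK neK cf] by blast
  define m where "m = f v0"
  define x0 where "x0 = (\<lambda>j. v0$j)"
  have nsqK: "nsq F (\<lambda>j. v$j) = 1" if "v \<in> K" for v
  proof -
    have "v \<in> sphere 0 1" using IntD1[OF that[unfolded K_def]] .
    hence "1 = (norm v)^2" by (simp add: dist_norm)
    also have "\<dots> = (\<Sum>i\<in>UNIV. (v$i)^2)" by (rule norm_vec_sq)
    also have "\<dots> = (\<Sum>i\<in>F. (v$i)^2)"
    proof (rule sum.mono_neutral_right)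
      have "v \<in> {v. \<forall>i. i \<notin> F \<longrightarrow> v$i = 0}" using IntD2[OF that[unfolded K_def]] .
      thus "\<forall>i\<in>UNIV - F. (v$i)^2 = 0" by (simp add: Diff_eq)
    qed auto
    finally show ?thesis by (simp add: nsq_def)
  qed
  have main: "m * nsq F v \<le> qf A F v" for v
  proof (cases "nsq F v = 0")
    case True
    have "qf A F v = 0" using nsq_zero[OF finF True] by (simp add: qf_def)
    thus ?thesis using True by simp
  next
    case False
    define s where "s = sqrt (nsq F v)"
    have spos: "s > 0" using False nsq_nonneg[of F v] by (simp add: s_def)
    have s2: "s^2 = nsq F v" using nsq_nonneg[of F v] by (simp add: s_def)
    define u where "u = (\<chi> j. if j \<in> F then v j / s else 0)"
    have uF: "\<And>j. j \<in> F \<Longrightarrow> u$j = (1/s) * v j" by (simp add: u_def)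
    have nu: "nsq F (\<lambda>j. u$j) = 1"
    proof -
      have "nsq F (\<lambda>j. u$j) = nsq F (\<lambda>j. (1/s) * v j)" by (rule nsq_cong) (simp add: uF)
      also have "\<dots> = (1/s)^2 * nsq F v" by (rule nsq_scale)
      also have "\<dots> = 1" using spos s2[symmetric] by (simp add: power_divide)
      finally show ?thesis .
    qed
    have "(norm u)^2 = (\<Sum>i\<in>UNIV. (u$i)^2)" by (rule norm_vec_sq)
    also have "\<dots> = (\<Sum>i\<in>F. (u$i)^2)"
      by (rule sum.mono_neutral_right) (auto simp: u_def)
    also have "\<dots> = 1" using nu by (simp add: nsq_def)
    finally have "(norm u)^2 = 1" .
    hence "norm u = 1" using norm_ge_zero[of u] by (smt (verit) power2_eq_1_iff)
    hence uK: "u \<in> K" by (auto simp: K_def u_def)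
    have "m \<le> f u" using v0(2)[OF uK] by (simp add: m_def)
    also have "f u = qf A F (\<lambda>j. (1/s) * v j)" unfolding f_def by (rule qf_cong) (simp add: uF)
    also have "\<dots> = (1/s)^2 * qf A F v" by (rule qf_scale)
    also have "\<dots> = qf A F v / s^2" by (simp add: power_divide)
    finally have "m * s^2 \<le> qf A F v" using spos by (simp add: field_simps)
    thus ?thesis using s2 by simp
  qed
  define B where "B = (\<lambda>i k. A i k - (if i = k then m else 0))"
  have qB: "qf B F x = qf A F x - m * nsq F x" for x

  proof -
    have "(\<Sum>k\<in>F. x j * B j k * x k) = (\<Sum>k\<in>F. x j * A j k * x k) - m * (x j)^2" if "j \<in> F" for j
    proof -
      have "(\<Sum>k\<in>F. x j * B j k * x k) = (\<Sum>k\<in>F. x j * A j k * x k - (if k = j then m * (x j)^2 else 0))"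
        by (rule sum.cong) (auto simp: B_def algebra_simps power2_eq_square)
      also have "\<dots> = (\<Sum>k\<in>F. x j * A j k * x k) - m * (x j)^2"
        using that by (simp add: sum_subtractf sum.delta)
      finally show ?thesis .
    qed
    hence "qf B F x = (\<Sum>j\<in>F. (\<Sum>k\<in>F. x j * A j k * x k) - m * (x j)^2)"
      unfolding qf_def by (rule sum.cong[OF refl])
    also have "\<dots> = qf A F x - m * nsq F x" by (simp add: qf_def nsq_def sum_subtractf sum_distrib_left)
    finally show ?thesis .
  qed
  have qBpos: "0 \<le> qf B F x" for x using main[of x] qB[of x] by simp
  have n0: "nsq F x0 = 1" using nsqK[OF v0(1)] by (simp add: x0_def)
  have qB0: "qf B F x0 = 0" using qB[of x0] n0 by (simp add: m_def f_def x0_def)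
  have symB: "\<And>i k. i \<in> F \<Longrightarrow> k \<in> F \<Longrightarrow> B i k = B k i" using sym by (auto simp: B_def)
  have eig: "(\<Sum>k\<in>F. A i k * x0 k) = m * x0 i" if iF: "i \<in> F" for i
  proof -
    define y where "y = (\<lambda>j. if j = i then 1 else (0::real))"
    have "(\<Sum>j\<in>F. \<Sum>k\<in>F. y j * B j k * x0 k) = (\<Sum>k\<in>F. B i k * x0 k)"
    proof -
      have "(\<Sum>j\<in>F. \<Sum>k\<in>F. y j * B j k * x0 k) = (\<Sum>j\<in>F. if j = i then (\<Sum>k\<in>F. B i k * x0 k) else 0)"
        by (rule sum.cong) (auto simp: y_def)
      also have "\<dots> = (\<Sum>k\<in>F. B i k * x0 k)" using iF by (simp add: sum.delta')
      finally show ?thesis .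
    qed
    moreover have "(\<Sum>j\<in>F. \<Sum>k\<in>F. y j * B j k * x0 k) = 0"
    proof (rule quad_zero[of "qf B F y"])
      show "0 \<le> qf B F y" by (rule qBpos)
      fix t :: real
      have "0 \<le> qf B F (\<lambda>j. x0 j + (-t) * y j)" by (rule qBpos)
      thus "2*t*(\<Sum>j\<in>F. \<Sum>k\<in>F. y j * B j k * x0 k) \<le> t^2 * qf B F y"
        using qf_expand[where B=B and F=F and x=x0 and t="-t" and y=y, OF symB] qB0 by (simp add: algebra_simps)
    qed
    ultimately have "(\<Sum>k\<in>F. B i k * x0 k) = 0" by simp
    moreover have "(\<Sum>k\<in>F. B i k * x0 k) = (\<Sum>k\<in>F. A i k * x0 k) - m * x0 i"
      using iF unfolding B_def
      by (simp add: right_diff_distrib left_diff_distrib sum_subtractf if_distrib[of "\<lambda>z. z * x0 _"] sum.delta cong: if_cong)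
    ultimately show ?thesis by simp
  qed
  have "\<exists>i\<in>F. x0 i \<noteq> 0"
  proof (rule ccontr)
    assume "\<not> ?thesis"
    hence "nsq F x0 = 0" by (simp add: nsq_def)
    thus False using n0 by simp
  qed
  hence "eigval_on A F m" unfolding eigval_on_def using eig by blast
  thus ?thesis using main by blast
qed


lemma eig_bounds:
  fixes A :: "'d::finite \<Rightarrow> 'd \<Rightarrow> real"
  assumes ne: "F \<noteq> {}" and sym: "\<And>i k. i \<in> F \<Longrightarrow> k \<in> F \<Longrightarrow> A i k = A k i"
    and ev: "\<And>mu. eigval_on A F mu \<Longrightarrow> rho \<le> mu \<and> mu \<le> L"
  shows "rho * nsq F v \<le> qf A F v" "qf A F v \<le> L * nsq F v"
proof -
  obtain m where m: "eigval_on A F m" "\<And>v. m * nsq F v \<le> qf A F v"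
    using rayleigh_min[where A=A and F=F, OF ne sym] by blast
  have "rho * nsq F v \<le> m * nsq F v" using ev[OF m(1)] nsq_nonneg[of F v] by (simp add: mult_right_mono)
  thus "rho * nsq F v \<le> qf A F v" using m(2)[of v] by linarith
  have symN: "\<And>i k. i \<in> F \<Longrightarrow> k \<in> F \<Longrightarrow> (\<lambda>i k. - A i k) i k = (\<lambda>i k. - A i k) k i" using sym by simp
  obtain m' where m': "eigval_on (\<lambda>i k. - A i k) F m'" "\<And>v. m' * nsq F v \<le> qf (\<lambda>i k. - A i k) F v"
    using rayleigh_min[where A="\<lambda>i k. - A i k" and F=F, OF ne symN] by blast
  have "eigval_on A F (- m')"
  proof -
    obtain w where w: "\<exists>i\<in>F. w i \<noteq> 0" "\<forall>i\<in>F. (\<Sum>k\<in>F. - A i k * w k) = m' * w i"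
      using m'(1) unfolding eigval_on_def by blast
    have "\<forall>i\<in>F. (\<Sum>k\<in>F. A i k * w k) = - m' * w i"
    proof
      fix i assume "i \<in> F"
      hence "(\<Sum>k\<in>F. - A i k * w k) = m' * w i" using w(2) by blast
      hence "- (\<Sum>k\<in>F. A i k * w k) = m' * w i" by (simp add: sum_negf)
      thus "(\<Sum>k\<in>F. A i k * w k) = - m' * w i" by simp
    qed
    thus ?thesis unfolding eigval_on_def using w(1) by blast
  qed
  hence "- m' \<le> L" using ev by blast
  have "qf (\<lambda>i k. - A i k) F v = - qf A F v" unfolding qf_def by (simp add: sum_negf)
  hence "qf A F v \<le> - m' * nsq F v" using m'(2)[of v] by simp
  also have "\<dots> \<le> L * nsq F v" using \<open>- m' \<le> L\<close> nsq_nonneg[of F v] by (metis mult_minus_left mult_right_mono)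
  finally show "qf A F v \<le> L * nsq F v" .
qed



definition bm :: "'w measure \<Rightarrow> ('w \<Rightarrow> real) \<Rightarrow> bool" where
  "bm M f \<longleftrightarrow> f \<in> borel_measurable M \<and> (\<exists>B. AE w in M. \<bar>f w\<bar> \<le> B)"

lemma bm_const: "bm M (\<lambda>w. c)"
  unfolding bm_def by (intro conjI exI[of _ "\<bar>c\<bar>"]) auto

lemma bm_add: "bm M f \<Longrightarrow> bm M g \<Longrightarrow> bm M (\<lambda>w. f w + g w)"
  unfolding bm_def
proof (elim conjE exE, intro conjI)
  fix B C assume "AE w in M. \<bar>f w\<bar> \<le> B" "AE w in M. \<bar>g w\<bar> \<le> C"
  hence "AE w in M. \<bar>f w + g w\<bar> \<le> B + C" by eventually_elim (simp add: abs_triangle_ineq order_trans[OF abs_triangle_ineq] add_mono)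
  thus "\<exists>B. AE w in M. \<bar>f w + g w\<bar> \<le> B" by blast
qed auto

lemma bm_mult: "bm M f \<Longrightarrow> bm M g \<Longrightarrow> bm M (\<lambda>w. f w * g w)"
  unfolding bm_def
proof (elim conjE exE, intro conjI)
  fix B C assume "AE w in M. \<bar>f w\<bar> \<le> B" "AE w in M. \<bar>g w\<bar> \<le> C"
  hence "AE w in M. \<bar>f w * g w\<bar> \<le> B * C" by eventually_elim (simp add: abs_mult mult_mono')
  thus "\<exists>B. AE w in M. \<bar>f w * g w\<bar> \<le> B" by blast
qed auto

lemma bm_minus: "bm M f \<Longrightarrow> bm M (\<lambda>w. - f w)"
  using bm_mult[OF bm_const[of M "-1"], of f] by simp

lemma bm_diff: "bm M f \<Longrightarrow> bm M g \<Longrightarrow> bm M (\<lambda>w. f w - g w)"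
  using bm_add[OF _ bm_minus, of M f g] by simp

lemma bm_sum: "finite I \<Longrightarrow> (\<And>i. i \<in> I \<Longrightarrow> bm M (f i)) \<Longrightarrow> bm M (\<lambda>w. \<Sum>i\<in>I. f i w)"
proof (induction I rule: finite_induct)
  case empty thus ?case using bm_const[of M 0] by simp
next
  case (insert x F) thus ?case using bm_add[of M "f x" "\<lambda>w. \<Sum>i\<in>F. f i w"] by simp
qed

lemma bm_integrable: "finite_measure M \<Longrightarrow> bm M f \<Longrightarrow> integrable M f"
  apply (unfold bm_def, elim conjE exE)
  subgoal for B by (rule finite_measure.integrable_const_bound[where B=B]) (auto simp: real_norm_def)
  done

lemma bm_cong: "bm M f \<Longrightarrow> (\<And>w. w \<in> space M \<Longrightarrow> f w = g w) \<Longrightarrow> bm M g"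
  unfolding bm_def
proof (elim conjE exE, intro conjI)
  fix B assume "AE w in M. \<bar>f w\<bar> \<le> B" "\<And>w. w \<in> space M \<Longrightarrow> f w = g w"
  hence "AE w in M. \<bar>g w\<bar> \<le> B" by (auto elim!: AE_mp intro!: AE_I2)
  thus "\<exists>B. AE w in M. \<bar>g w\<bar> \<le> B" by blast
next
  assume "f \<in> borel_measurable M" "\<And>w. w \<in> space M \<Longrightarrow> f w = g w"
  thus "g \<in> borel_measurable M" using measurable_cong by metis
qed

lemma sq_expand:
  assumes fm: "finite_measure M" and f: "bm M f" and g: "bm M g"
  shows "(\<integral>w. (f w + t * g w)^2 \<partial>M) = (\<integral>w. (f w)^2 \<partial>M) + 2 * t * (\<integral>w. f w * g w \<partial>M) + t^2 * (\<integral>w. g w * g w \<partial>M)"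
proof -
  have i1: "integrable M (\<lambda>w. (f w)^2)" using bm_integrable[OF fm bm_mult[OF f f]] by (simp add: power2_eq_square)
  have i2: "integrable M (\<lambda>w. f w * g w)" using bm_integrable[OF fm bm_mult[OF f g]] .
  have i3: "integrable M (\<lambda>w. g w * g w)" using bm_integrable[OF fm bm_mult[OF g g]] .
  have "(\<integral>w. (f w + t * g w)^2 \<partial>M) = (\<integral>w. (f w)^2 + ((2 * t) * (f w * g w) + t^2 * (g w * g w)) \<partial>M)"
    by (rule Bochner_Integration.integral_cong) (auto simp: power2_eq_square algebra_simps)
  also have "\<dots> = (\<integral>w. (f w)^2 \<partial>M) + ((\<integral>w. (2*t) * (f w * g w) \<partial>M) + (\<integral>w. t^2 * (g w * g w) \<partial>M))"
    using i1 i2 i3 by simp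
  also have "\<dots> = (\<integral>w. (f w)^2 \<partial>M) + 2 * t * (\<integral>w. f w * g w \<partial>M) + t^2 * (\<integral>w. g w * g w \<partial>M)"
    by simp
  finally show ?thesis .
qed



theorem mainTheorem9:
  fixes M :: "'w measure" and X :: "'w \<Rightarrow> 'd::finite \<Rightarrow> real" and Y :: "'w \<Rightarrow> real"
    and eps :: "'w \<Rightarrow> real" and bstar :: "'d \<Rightarrow> real"
    and rho L Mx :: real and S :: "'d set" and bS :: "'d \<Rightarrow> real"
  assumes prob: "prob_space M"
    and Xmeas: "\<And>j. (\<lambda>w. X w j) \<in> borel_measurable M"
    and Ymeas: "Y \<in> borel_measurable M"
    and mean0: "\<And>j. (\<integral>w. X w j \<partial>M) = 0"
    and model: "\<And>w. w \<in> space M \<Longrightarrow> Y w = lin bstar X w + eps w"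
    and noise: "AE w in M. real_cond_exp M (vimage_algebra (space M) X (Pi\<^sub>M UNIV (\<lambda>_. borel))) eps w = 0"
    and rho_pos: "0 < rho" and rho_L: "rho \<le> L"
    and eig: "\<And>F mu. card F = card (supp bstar) \<Longrightarrow> eigval_on (covm M X) F mu \<Longrightarrow> rho \<le> mu \<and> mu \<le> L"
    and incoh: "\<And>F j v. card F = card (supp bstar) \<Longrightarrow> j \<notin> F \<Longrightarrow>
                 (\<forall>i\<in>F. (\<Sum>k\<in>F. covm M X i k * v k) = covm M X i j) \<Longrightarrow> (\<Sum>k\<in>F. \<bar>v k\<bar>) < 1"
    and ybound: "AE w in M. \<bar>Y w\<bar> < 1"
    and xbound: "AE w in M. \<forall>j. \<bar>X w j\<bar> < Mx"
    and Ssub: "S \<subset> supp bstar"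
    and bS_supp: "supp bS \<subseteq> S"
    and bS_min: "\<And>b. supp b \<subseteq> S \<Longrightarrow> risk M X Y bS \<le> risk M X Y b"
  shows "(INF p \<in> (UNIV :: real set) \<times> (supp bstar - S).
            \<integral>w. (lin bS X w + fst p * bstar (snd p) * X w (snd p) - Y w)^2 \<partial>M)
         \<le> (\<integral>w. (lin bS X w - Y w)^2 \<partial>M)
            - 1 / (real (card (supp bstar)) - real (card S)) * (rho / L)
              * (\<integral>w. (lin (\<lambda>j. bstar j - bS j) X w)^2 \<partial>M)"
proof -
  interpret P: prob_space M by (rule prob)
  have fm: "finite_measure M" by (rule P.finite_measure_axioms)
  define Sst where "Sst = supp bstar"
  define Z where "Z = (\<lambda>j w. X w j)"
  define D where "D = (\<lambda>j. bstar j - bS j)"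
  define r where "r = (\<lambda>w. Y w - lin bS X w)"
  define eps' where "eps' = (\<lambda>w. Y w - lin bstar X w)"
  define g where "g = (\<lambda>j k. \<integral>w. Z j w * Z k w \<partial>M)"
  define c where "c = (\<lambda>j. \<integral>w. Z j w * r w \<partial>M)"
  define h where "h = (\<lambda>j. \<integral>w. Z j w * lin D X w \<partial>M)"
  have bmZ: "bm M (Z j)" for j
    unfolding bm_def Z_def
  proof (intro conjI exI[of _ Mx])
    show "(\<lambda>w. X w j) \<in> borel_measurable M" by (rule Xmeas)
    show "AE w in M. \<bar>X w j\<bar> \<le> Mx" using xbound by eventually_elim (auto intro: less_imp_le)
  qed
  have bmY: "bm M Y"
    unfolding bm_def
  proof (intro conjI exI[of _ 1])
    show "AE w in M. \<bar>Y w\<bar> \<le> 1" using ybound by eventually_elim (auto intro: less_imp_le)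
  qed (rule Ymeas)
  have bmlin: "bm M (lin b X)" for b
  proof -
    have "bm M (\<lambda>w. \<Sum>j\<in>UNIV. b j * Z j w)"
      by (intro bm_sum bm_mult bm_const bmZ) simp
    thus ?thesis by (simp add: lin_def[abs_def] Z_def)
  qed
  have bmr: "bm M r" unfolding r_def by (intro bm_diff bmY bmlin)
  have bme': "bm M eps'" unfolding eps'_def by (intro bm_diff bmY bmlin)
  have eps_eq: "\<And>w. w \<in> space M \<Longrightarrow> eps w = eps' w" using model by (simp add: eps'_def)
  have bme: "bm M eps" by (rule bm_cong[OF bme']) (simp add: eps_eq)
  have linD: "lin D X w = lin bstar X w - lin bS X w" for w
    by (simp add: lin_def D_def sum_subtractf left_diff_distrib)
  have r_eq: "\<And>w. w \<in> space M \<Longrightarrow> r w = lin D X w + eps w"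
    using model by (simp add: r_def linD)
  have int: "\<And>f. bm M f \<Longrightarrow> integrable M f" by (rule bm_integrable[OF fm])
  define Fs where "Fs = vimage_algebra (space M) X (Pi\<^sub>M UNIV (\<lambda>_. borel :: real measure))"
  have Xm: "X \<in> measurable M (Pi\<^sub>M UNIV (\<lambda>_. borel :: real measure))"
  proof -
    have "(\<lambda>w j. X w j) \<in> measurable M (Pi\<^sub>M UNIV (\<lambda>_. borel :: real measure))"
      by (rule measurable_PiM_single') (auto simp: Xmeas)
    thus ?thesis by simp
  qed
  have subalg: "subalgebra M Fs"
    unfolding subalgebra_def Fs_def
    using sets_image_in_sets[OF refl Xm] by simp
  have sfs: "sigma_finite_subalgebra M Fs"
  proof -
    have "finite_measure (restr_to_subalg M Fs)" by (rule finite_measure_restr_to_subalg[OF subalg fm])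
    hence "sigma_finite_measure (restr_to_subalg M Fs)" by (simp add: finite_measure_def)
    thus ?thesis using subalg by (simp add: sigma_finite_subalgebra_def)
  qed
  have ZFs: "Z j \<in> borel_measurable Fs" for j
  proof -
    have "X \<in> measurable Fs (Pi\<^sub>M UNIV (\<lambda>_. borel :: real measure))"
      unfolding Fs_def by (rule measurable_vimage_algebra1) (simp add: space_PiM)
    from measurable_comp[OF this measurable_component_singleton[of j UNIV "\<lambda>_. borel :: real measure"]]
    show ?thesis by (simp add: Z_def o_def)
  qed
  have epsm: "eps \<in> borel_measurable M" using bme by (simp add: bm_def)
  have orth: "(\<integral>w. Z j w * eps w \<partial>M) = 0" for j
  proof -
    have "(\<integral>w. Z j w * eps w \<partial>M) = (\<integral>w. Z j w * real_cond_exp M Fs eps w \<partial>M)"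
      using sigma_finite_subalgebra.real_cond_exp_intg(2)[OF sfs int[OF bm_mult[OF bmZ bme]] ZFs epsm] by simp
    also have "\<dots> = (\<integral>w. 0 \<partial>M)"
    proof (rule integral_cong_AE)
      have "Z j \<in> borel_measurable M" using bmZ by (simp add: bm_def)
      moreover have "real_cond_exp M Fs eps \<in> borel_measurable M"
        by (rule borel_measurable_cond_exp2)
      ultimately show "(\<lambda>w. Z j w * real_cond_exp M Fs eps w) \<in> borel_measurable M" by simp
      show "AE w in M. Z j w * real_cond_exp M Fs eps w = 0"
        using noise unfolding Fs_def by eventually_elim simp
    qed simp
    finally show ?thesis by simp
  qed
  have cov: "covm M X j k = g j k" for j k by (simp add: covm_def mean0 g_def Z_def)
  have gsym: "g j k = g k j" for j k unfolding g_def by (simp add: mult.commute)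
  have h_eq: "h j = (\<Sum>k\<in>UNIV. D k * g j k)" for j
  proof -
    have "h j = (\<integral>w. (\<Sum>k\<in>UNIV. D k * (Z j w * Z k w)) \<partial>M)"
      unfolding h_def by (rule Bochner_Integration.integral_cong) (auto simp: lin_def Z_def sum_distrib_left mult_ac)
    also have "\<dots> = (\<Sum>k\<in>UNIV. (\<integral>w. D k * (Z j w * Z k w) \<partial>M))"
      by (rule Bochner_Integration.integral_sum) (intro int bm_mult bm_const bmZ)
    also have "\<dots> = (\<Sum>k\<in>UNIV. D k * g j k)" by (simp add: g_def)
    finally show ?thesis .
  qed
  have c_eq: "c j = h j" for j
  proof -
    have "c j = (\<integral>w. Z j w * lin D X w + Z j w * eps w \<partial>M)"
      unfolding c_def by (rule Bochner_Integration.integral_cong) (auto simp: r_eq distrib_left)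
    also have "\<dots> = h j + (\<integral>w. Z j w * eps w \<partial>M)"
      unfolding h_def by (rule Bochner_Integration.integral_add) (intro int bm_mult bmZ bmlin bme)+
    finally show ?thesis using orth[of j] by simp
  qed
  define Q where "Q = (\<integral>w. (lin D X w)^2 \<partial>M)"
  have Q_nonneg: "0 \<le> Q" unfolding Q_def by simp
  have Q_eq: "Q = (\<Sum>j\<in>UNIV. D j * h j)"
  proof -
    have "Q = (\<integral>w. (\<Sum>j\<in>UNIV. D j * (Z j w * lin D X w)) \<partial>M)"
      unfolding Q_def by (rule Bochner_Integration.integral_cong)
        (auto simp: power2_eq_square lin_def[of D] Z_def sum_distrib_left sum_distrib_right mult_ac)
    also have "\<dots> = (\<Sum>j\<in>UNIV. (\<integral>w. D j * (Z j w * lin D X w) \<partial>M))"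
      by (rule Bochner_Integration.integral_sum) (intro int bm_mult bm_const bmZ bmlin)
    also have "\<dots> = (\<Sum>j\<in>UNIV. D j * h j)" by (simp add: h_def)
    finally show ?thesis .
  qed
  have S_sub: "S \<subseteq> Sst" using Ssub by (auto simp: Sst_def)
  have D0: "D j = 0" if "j \<notin> Sst" for j
  proof -
    have "bstar j = 0" using that by (simp add: Sst_def supp_def)
    moreover have "bS j = 0" using that bS_supp S_sub by (auto simp: supp_def)
    ultimately show ?thesis by (simp add: D_def)
  qed
  have Q_qf: "Q = qf g Sst D"
  proof -
    have "Q = (\<Sum>j\<in>Sst. D j * h j)" unfolding Q_eq
      by (rule sum.mono_neutral_right) (auto simp: D0)
    also have "\<dots> = (\<Sum>j\<in>Sst. \<Sum>k\<in>Sst. D j * g j k * D k)"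
    proof (rule sum.cong[OF refl])
      fix j assume "j \<in> Sst"
      have "h j = (\<Sum>k\<in>Sst. D k * g j k)" unfolding h_eq
        by (rule sum.mono_neutral_right) (auto simp: D0)
      thus "D j * h j = (\<Sum>k\<in>Sst. D j * g j k * D k)" by (simp add: sum_distrib_left mult_ac)
    qed
    finally show ?thesis by (simp add: qf_def)
  qed
  have Q_c: "Q = (\<Sum>j\<in>Sst. D j * c j)"
    unfolding Q_eq c_eq by (rule sum.mono_neutral_right) (auto simp: D0)
  have g_nonneg: "0 \<le> g j j" for j unfolding g_def by simp
  have opt: "c j = 0" if jS: "j \<in> S" for j
  proof (rule quad_zero[of "g j j"])
    show "0 \<le> g j j" by (rule g_nonneg)
    fix t :: real
    define b where "b = (\<lambda>k. bS k + t * (if k = j then 1 else 0))"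
    have "supp b \<subseteq> S" using bS_supp jS by (auto simp: supp_def b_def split: if_splits)
    hence le: "risk M X Y bS \<le> risk M X Y b" by (rule bS_min)
    have linb: "lin b X w = lin bS X w + t * Z j w" for w
    proof -
      have "lin b X w = (\<Sum>k\<in>UNIV. bS k * X w k + (if k = j then t * X w j else 0))"
        unfolding lin_def b_def by (rule sum.cong) (auto simp: algebra_simps)
      also have "\<dots> = lin bS X w + t * Z j w"
        by (simp add: sum.distrib lin_def Z_def)
      finally show ?thesis .
    qed
    have "risk M X Y b = (\<integral>w. (r w + (-t) * Z j w)^2 \<partial>M)"
      unfolding risk_def by (rule Bochner_Integration.integral_cong) (auto simp: linb r_def algebra_simps)
    also have "\<dots> = (\<integral>w. (r w)^2 \<partial>M) + 2 * (-t) * c j + (-t)^2 * g j j"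
      by (subst sq_expand[OF fm bmr bmZ]) (simp add: c_def g_def mult.commute)
    finally have rb: "risk M X Y b = (\<integral>w. (r w)^2 \<partial>M) + 2 * (-t) * c j + (-t)^2 * g j j" .
    have "risk M X Y bS = (\<integral>w. (r w)^2 \<partial>M)" by (simp add: risk_def r_def)
    hence "0 \<le> 2 * (-t) * c j + (-t)^2 * g j j" using le rb by simp
    show "2 * t * c j \<le> t^2 * g j j" using \<open>0 \<le> 2 * (-t) * c j + (-t)^2 * g j j\<close> by simp
  qed
  have neS: "Sst \<noteq> {}" using Ssub by (auto simp: Sst_def)
  have covg: "covm M X = g" using cov by (intro ext)
  have evg: "\<And>mu. eigval_on g Sst mu \<Longrightarrow> rho \<le> mu \<and> mu \<le> L"
    using eig[of Sst] covg by (simp add: Sst_def)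
  have EB1: "rho * nsq Sst v \<le> qf g Sst v" for v
    by (rule eig_bounds(1)[where A=g and F=Sst, OF neS gsym evg])
  have EB2: "qf g Sst v \<le> L * nsq Sst v" for v
    by (rule eig_bounds(2)[where A=g and F=Sst, OF neS gsym evg])
  have gii: "rho \<le> g i i \<and> g i i \<le> L" if "i \<in> Sst" for i
  proof -
    define e where "e = (\<lambda>k. if k = i then 1 else (0::real))"
    have in1: "(\<Sum>k\<in>Sst. e j * g j k * e k) = e j * g j i" for j
    proof -
      have "(\<Sum>k\<in>Sst. e j * g j k * e k) = (\<Sum>k\<in>Sst. if k = i then e j * g j i else 0)"
        by (rule sum.cong) (auto simp: e_def)
      also have "\<dots> = e j * g j i" using that by simp
      finally show ?thesis .
    qed
    have "qf g Sst e = (\<Sum>j\<in>Sst. e j * g j i)" unfolding qf_def using in1 by simp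
    also have "\<dots> = (\<Sum>j\<in>Sst. if j = i then g i i else 0)"
      by (rule sum.cong) (auto simp: e_def)
    also have "\<dots> = g i i" using that by simp
    finally have "qf g Sst e = g i i" .
    moreover have "nsq Sst e = 1"
    proof -
      have "nsq Sst e = (\<Sum>j\<in>Sst. if j = i then 1 else 0)" unfolding nsq_def by (rule sum.cong) (auto simp: e_def)
      thus ?thesis using that by simp
    qed
    ultimately show ?thesis using EB1[of e] EB2[of e] by simp
  qed
  define T where "T = Sst - S"
  have finT: "finite T" by simp
  have neT: "T \<noteq> {}" using Ssub by (auto simp: T_def Sst_def)
  have cardT: "real (card T) = real (card (supp bstar)) - real (card S)"
    using S_sub by (simp add: T_def Sst_def card_Diff_subset card_mono of_nat_diff)
  have QT: "Q = (\<Sum>j\<in>T. D j * c j)"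
    unfolding Q_c T_def by (rule sum.mono_neutral_right) (auto simp: opt)
  define mx where "mx = Max ((\<lambda>j. (c j)^2) ` T)"
  have "mx \<in> (\<lambda>j. (c j)^2) ` T" unfolding mx_def using finT neT by (intro Max_in) auto
  then obtain i where iT: "i \<in> T" and imx: "(c i)^2 = mx" by auto
  have cmax: "(c j)^2 \<le> (c i)^2" if "j \<in> T" for j
    unfolding imx mx_def using finT that by (intro Max_ge) auto
  define A1 where "A1 = (\<Sum>j\<in>T. (D j)^2)"
  define C1 where "C1 = (\<Sum>j\<in>T. (c j)^2)"
  have CS: "Q^2 \<le> A1 * C1" unfolding QT A1_def C1_def by (rule Cauchy_Schwarz_ineq_sum)
  have A1le: "A1 \<le> nsq Sst D" unfolding A1_def nsq_def T_def by (rule sum_mono2) auto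
  have rA1: "rho * A1 \<le> Q" using EB1[of D] A1le rho_pos Q_qf
    by (smt (verit) mult_left_mono)
  have C1le: "C1 \<le> real (card T) * (c i)^2" unfolding C1_def
    using sum_bounded_above[of T "\<lambda>j. (c j)^2" "(c i)^2"] cmax by simp
  have A1nn: "0 \<le> A1" unfolding A1_def by (simp add: sum_nonneg)
  have C1nn: "0 \<le> C1" unfolding C1_def by (simp add: sum_nonneg)
  have key: "rho * Q \<le> real (card T) * (c i)^2"
  proof (cases "Q = 0")
    case True thus ?thesis by simp
  next
    case False
    hence Qp: "0 < Q" using Q_nonneg by simp
    have "rho * Q^2 \<le> rho * (A1 * C1)" using CS rho_pos by simp
    also have "\<dots> = (rho * A1) * C1" by simp
    also have "\<dots> \<le> Q * C1" using rA1 C1nn by (rule mult_right_mono)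
    also have "\<dots> \<le> Q * (real (card T) * (c i)^2)" using C1le Qp by simp
    finally have "Q * (rho * Q) \<le> Q * (real (card T) * (c i)^2)" by (simp add: power2_eq_square mult_ac)
    thus ?thesis using Qp by simp
  qed
  have iS: "i \<in> Sst" using iT by (simp add: T_def)
  have bi: "bstar i \<noteq> 0" using iS by (simp add: Sst_def supp_def)
  have gpos: "0 < g i i" using gii[OF iS] rho_pos by linarith
  define a where "a = c i / g i i"
  define al where "al = a / bstar i"
  have val: "(\<integral>w. (lin bS X w + al * bstar i * X w i - Y w)^2 \<partial>M) = (\<integral>w. (r w)^2 \<partial>M) - (c i)^2 / g i i"
  proof -
    have "(\<integral>w. (lin bS X w + al * bstar i * X w i - Y w)^2 \<partial>M) = (\<integral>w. (r w + (-a) * Z i w)^2 \<partial>M)"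
      by (rule Bochner_Integration.integral_cong) (auto simp: al_def bi r_def Z_def power2_eq_square algebra_simps)
    also have "\<dots> = (\<integral>w. (r w)^2 \<partial>M) + 2 * (-a) * c i + (-a)^2 * g i i"
      by (subst sq_expand[OF fm bmr bmZ]) (simp add: c_def g_def mult.commute)
    also have "\<dots> = (\<integral>w. (r w)^2 \<partial>M) - (c i)^2 / g i i"
      using gpos by (simp add: a_def power2_eq_square field_simps)
    finally show ?thesis .
  qed
  have base: "(\<integral>w. (lin bS X w - Y w)^2 \<partial>M) = (\<integral>w. (r w)^2 \<partial>M)"
    by (rule Bochner_Integration.integral_cong) (auto simp: r_def power2_eq_square algebra_simps)
  have QD: "(\<integral>w. (lin (\<lambda>j. bstar j - bS j) X w)^2 \<partial>M) = Q" by (simp add: Q_def D_def)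
  have nT: "0 < real (card T)" using finT neT by (simp add: card_gt_0_iff)
  have Lpos: "0 < L" using rho_pos rho_L by linarith
  have bound: "1 / real (card T) * (rho / L) * Q \<le> (c i)^2 / g i i"
  proof -
    have "1 / real (card T) * (rho / L) * Q = (rho * Q) / (real (card T) * L)" by (simp add: field_simps)
    also have "\<dots> \<le> (real (card T) * (c i)^2) / (real (card T) * L)"
      using key nT Lpos by (intro divide_right_mono) auto
    also have "\<dots> = (c i)^2 / L" using nT by (metis mult_divide_mult_cancel_left_if less_irrefl)
    also have "\<dots> \<le> (c i)^2 / g i i" using gii[OF iS] gpos by (intro divide_left_mono) auto
    finally show ?thesis .
  qed
  have mem: "(al, i) \<in> (UNIV :: real set) \<times> (supp bstar - S)" using iT by (simp add: T_def Sst_def)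
  have bdd: "bdd_below ((\<lambda>p. \<integral>w. (lin bS X w + fst p * bstar (snd p) * X w (snd p) - Y w)^2 \<partial>M) ` ((UNIV :: real set) \<times> (supp bstar - S)))"
    by (rule bdd_belowI[of _ 0]) auto
  have "(INF p \<in> (UNIV :: real set) \<times> (supp bstar - S).
            \<integral>w. (lin bS X w + fst p * bstar (snd p) * X w (snd p) - Y w)^2 \<partial>M)
        \<le> (\<integral>w. (lin bS X w + al * bstar i * X w i - Y w)^2 \<partial>M)"
    using cINF_lower[OF bdd mem] by simp
  also have "\<dots> \<le> (\<integral>w. (lin bS X w - Y w)^2 \<partial>M)
            - 1 / (real (card (supp bstar)) - real (card S)) * (rho / L)
              * (\<integral>w. (lin (\<lambda>j. bstar j - bS j) X w)^2 \<partial>M)"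
    unfolding val base QD cardT[symmetric] using bound by linarith
  finally show ?thesis .
qed


end
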